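(* (ZFC) If $\kappa$ is a singular cardinal, then there is no minimal access ideal on $\kappa$. In particular, for the natural well-ordering $<$ of $\kappa$, $Seg(<)$ is not a minimal access ideal for $\kappa$; more precisely, for every preordering $\preccurlyeq$ of $\kappa$ there is a preordering $\preccurlyeq_1$ of $\kappa$ with $Seg(\preccurlyeq_1)\subsetneq Seg(\preccurlyeq)$.
   Context: An ideal on a set $X$ is a collection $\mathcal I$ of subsets of $X$ such that (i) $Y_1,Y_2\in\mathcal I\Rightarrow Y_1\cup Y_2\in\mathcal I$, (ii) $Y\in\mathcal I$, $Z\subseteq Y\Rightarrow Z\in\mathcal I$, (iii) $X\notin\mathcal I$. A preordering of $X$ is a reflexive, transitive, total binary relation $\preccurlyeq$ on $X$; throughout, all preorderings are assumed to have no last element. For $x\in X$ let ${\preccurlyeq_x}=\{y\in X:y\preccurlyeq x\}$. $Seg(\preccurlyeq)$ denotes the ideal of subsets $Y\subseteq X$ with $Y\subseteq{\preccurlyeq_x}$ for some $x\in X$. An ideal $\mathcal I$ on $X$ is an access ideal for $X$ if there is a preordering $\preccurlyeq$ of $X$ with $Seg(\preccurlyeq)\subseteq\mathcal I$. $\mathcal I$ is a minimal access ideal for $X$ if it is an access ideal for $X$ and for no ideal $\mathcal J\subsetneq\mathcal I$ is $\mathcal J$ an access ideal for $X$. *)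

theory Defs
  imports Main
begin

definition is_ideal :: "'a set \<Rightarrow> 'a set set \<Rightarrow> bool" where
  "is_ideal X I \<longleftrightarrow> I \<subseteq> Pow X
     \<and> (\<forall>Y1\<in>I. \<forall>Y2\<in>I. Y1 \<union> Y2 \<in> I)
     \<and> (\<forall>Y\<in>I. \<forall>Z. Z \<subseteq> Y \<longrightarrow> Z \<in> I)
     \<and> X \<notin> I"

definition preordering_of :: "'a set \<Rightarrow> 'a rel \<Rightarrow> bool" where
  "preordering_of X R \<longleftrightarrow> R \<subseteq> X \<times> X \<and> refl_on X R \<and> trans R \<and> total_on X R
     \<and> (\<forall>x\<in>X. \<exists>y\<in>X. (y, x) \<notin> R)"

definition seg_below :: "'a rel \<Rightarrow> 'a \<Rightarrow> 'a set" where
  "seg_below R x = {y. (y, x) \<in> R}"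

definition Seg :: "'a set \<Rightarrow> 'a rel \<Rightarrow> 'a set set" where
  "Seg X R = {Y. Y \<subseteq> X \<and> (\<exists>x\<in>X. Y \<subseteq> seg_below R x)}"

definition access_ideal :: "'a set \<Rightarrow> 'a set set \<Rightarrow> bool" where
  "access_ideal X I \<longleftrightarrow> is_ideal X I \<and> (\<exists>R. preordering_of X R \<and> Seg X R \<subseteq> I)"

definition minimal_access_ideal :: "'a set \<Rightarrow> 'a set set \<Rightarrow> bool" where
  "minimal_access_ideal X I \<longleftrightarrow> access_ideal X I
     \<and> \<not> (\<exists>J. is_ideal X J \<and> J \<subset> I \<and> access_ideal X J)"

definition singular_card :: "'a rel \<Rightarrow> bool" where
  "singular_card r \<longleftrightarrow> Card_order r \<and> infinite (Field r) \<and> \<not> regularCard r"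

end

theory Submission
  imports Defs
begin

unbundle cardinal_syntax

lemma seg_sub: "preordering_of X R \<Longrightarrow> seg_below R x \<subseteq> X"
  unfolding preordering_of_def seg_below_def by auto

lemma finite_bounded:
  assumes P: "preordering_of X R" and "finite Y" and "Y \<subseteq> X" and "X \<noteq> {}"
  shows "\<exists>x\<in>X. Y \<subseteq> seg_below R x"
  using assms(2,3)
proof (induction Y rule: finite_induct)
  case empty then show ?case using assms(4) by auto
next
  case (insert a F)
  then obtain x where x: "x \<in> X" "F \<subseteq> seg_below R x" by auto
  have a: "a \<in> X" using insert by auto
  from P have tot: "total_on X R" and tr: "trans R" and rf: "refl_on X R"
    unfolding preordering_of_def by auto
  show ?case
  proof (cases "(a, x) \<in> R")
    case True then show ?thesis using x unfolding seg_below_def by auto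
  next
    case False
    then have "(x, a) \<in> R" using tot x a rf unfolding total_on_def refl_on_def by metis
    then have "F \<subseteq> seg_below R a" using x tr unfolding seg_below_def trans_def by blast
    moreover have "(a,a) \<in> R" using rf a unfolding refl_on_def by auto
    ultimately show ?thesis using a unfolding seg_below_def by auto
  qed
qed

lemma key:
  assumes P: "preordering_of (Field r) R" and S: "singular_card r"
  shows "\<exists>x0\<in>Field r. \<exists>C\<subseteq>Field r. (\<forall>x\<in>Field r. \<not> C \<subseteq> seg_below R x)
            \<and> |C| \<le>o |seg_below R x0|"
proof (rule ccontr)
  let ?X = "Field r"
  assume H0: "\<not> ?thesis"
  have H: "|seg_below R x| <o |C|" if "x \<in> ?X" "C \<subseteq> ?X" "\<forall>x\<in>?X. \<not> C \<subseteq> seg_below R x" for x C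
  proof -
    have "\<not> |C| \<le>o |seg_below R x|" using H0 that by blast
    then show ?thesis using not_ordLeq_iff_ordLess[OF card_of_Well_order card_of_Well_order] by blast
  qed
  have cr: "Card_order r" and inf: "infinite ?X" and nreg: "\<not> regularCard r"
    using S unfolding singular_card_def by auto
  have Xne: "?X \<noteq> {}" using inf by auto
  have Xr: "|?X| =o r" using card_of_Field_ordIso[OF cr] .
  from P have tot: "total_on ?X R" and tr: "trans R" and rf: "refl_on ?X R"
    and nl: "\<forall>x\<in>?X. \<exists>y\<in>?X. (y, x) \<notin> R" and sub: "R \<subseteq> ?X \<times> ?X"
    unfolding preordering_of_def by auto
  have A: "\<exists>x\<in>?X. Y \<subseteq> seg_below R x" if Y: "Y \<subseteq> ?X" "|Y| <o r" for Y
  proof (rule ccontr)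
    assume ub: "\<not> (\<exists>x\<in>?X. Y \<subseteq> seg_below R x)"
    have Yinf: "infinite Y" using finite_bounded[OF P _ Y(1) Xne] ub by blast
    have cov: "?X \<subseteq> (\<Union>c\<in>Y. seg_below R c)"
    proof
      fix y assume y: "y \<in> ?X"
      then obtain c where c: "c \<in> Y" "c \<notin> seg_below R y" using ub by blast
      then have "(c, y) \<notin> R" unfolding seg_below_def by auto
      moreover have "c \<in> ?X" using c Y by auto
      ultimately have "(y, c) \<in> R" using tot y rf unfolding total_on_def refl_on_def by metis
      then show "y \<in> (\<Union>c\<in>Y. seg_below R c)" using c unfolding seg_below_def by auto
    qed
    have "\<forall>c\<in>Y. |seg_below R c| \<le>o |Y|"
    proof
      fix c assume "c \<in> Y"
      then have "c \<in> ?X" using Y by auto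
      then show "|seg_below R c| \<le>o |Y|" using H[of c Y] Y ub ordLess_imp_ordLeq by blast
    qed
    then have "|\<Union>c\<in>Y. seg_below R c| \<le>o |Y|"
      using card_of_UNION_ordLeq_infinite[OF Yinf] card_of_refl ordIso_iff_ordLeq by blast
    then have "|?X| \<le>o |Y|" using card_of_mono1[OF cov] ordLeq_transitive by blast
    then have "|?X| <o r" using Y(2) ordLeq_ordLess_trans by blast
    then show False using ordLess_ordIso_trans[OF _ ordIso_symmetric[OF Xr]] ordLess_irreflexive by blast
  qed
  obtain K where K: "K \<subseteq> ?X" "cofinal K r" "\<not> |K| =o r"
    using nreg unfolding regularCard_def by auto
  have "|K| \<le>o r" using card_of_mono1[OF K(1)] Xr ordLeq_ordIso_trans by blast
  then have Ks: "|K| <o r" using K(3) ordLeq_iff_ordLess_or_ordIso by blast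
  have "\<forall>k\<in>K. \<exists>b\<in>?X. underS r k \<subseteq> seg_below R b"
  proof
    fix k assume k: "k \<in> K"
    have "underS r k \<subseteq> ?X" unfolding underS_def Field_def by auto
    moreover have "|underS r k| <o r" using card_of_underS[OF cr] k K(1) by auto
    ultimately show "\<exists>b\<in>?X. underS r k \<subseteq> seg_below R b" using A by blast
  qed
  then obtain b where b: "\<forall>k\<in>K. b k \<in> ?X \<and> underS r k \<subseteq> seg_below R (b k)" by metis
  have "b ` K \<subseteq> ?X" using b by auto
  moreover have "|b ` K| <o r" using card_of_image[of b K] Ks ordLeq_ordLess_trans by blast
  ultimately obtain c where c: "c \<in> ?X" "b ` K \<subseteq> seg_below R c" using A by blast
  have "?X \<subseteq> seg_below R c"
  proof
    fix a assume a: "a \<in> ?X"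
    then obtain k where k: "k \<in> K" "a \<noteq> k" "(a, k) \<in> r" using K(2) unfolding cofinal_def by blast
    then have "a \<in> underS r k" unfolding underS_def by auto
    then have "(a, b k) \<in> R" using b k unfolding seg_below_def by auto
    moreover have "(b k, c) \<in> R" using c k unfolding seg_below_def by auto
    ultimately show "a \<in> seg_below R c" using tr unfolding seg_below_def trans_def by blast
  qed
  then show False using nl c unfolding seg_below_def by blast
qed

lemma construct:
  assumes P: "preordering_of X R" and x0: "x0 \<in> X" and C: "C \<subseteq> X"
    and ub: "\<forall>x\<in>X. \<not> C \<subseteq> seg_below R x" and le: "|C| \<le>o |seg_below R x0|"
  shows "\<exists>R1. preordering_of X R1 \<and> Seg X R1 \<subset> Seg X R"
proof -
  from P have tot: "total_on X R" and tr: "trans R" and rf: "refl_on X R"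
    and nl: "\<forall>x\<in>X. \<exists>y\<in>X. (y, x) \<notin> R" and sub: "R \<subseteq> X \<times> X"
    unfolding preordering_of_def by auto
  have rfl: "(a, a) \<in> R" if "a \<in> X" for a using rf that unfolding refl_on_def by auto
  have tt: "(a, b) \<in> R \<or> (b, a) \<in> R" if "a \<in> X" "b \<in> X" for a b
    using tot rfl that unfolding total_on_def by metis
  have trr: "(a, c) \<in> R" if "(a, b) \<in> R" "(b, c) \<in> R" for a b c
    using tr that unfolding trans_def by blast
  have Cne: "C \<noteq> {}"
  proof
    assume "C = {}"
    then have "C \<subseteq> seg_below R x0" by simp
    then show False using ub x0 by blast
  qed
  let ?S = "seg_below R x0"
  obtain g where g: "g ` ?S = C" using card_of_ordLeq2[OF Cne, THEN iffD2, OF le] by blast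
  define mx where "mx a b = (if (a, b) \<in> R then b else a)" for a b
  define m where "m a = (if a \<in> ?S then mx a (g a) else a)" for a
  have SX: "?S \<subseteq> X" using seg_sub[OF P] .
  have gX: "g a \<in> X" if "a \<in> ?S" for a using g C that by blast
  have mX: "m a \<in> X" if "a \<in> X" for a
    using gX[of a] that unfolding m_def mx_def by simp
  have mxa: "(a, mx a b) \<in> R" "(b, mx a b) \<in> R" if "a \<in> X" "b \<in> X" for a b
  proof -
    have "(a, b) \<in> R \<or> (b, a) \<in> R" using tt that by blast
    then show "(a, mx a b) \<in> R" "(b, mx a b) \<in> R"
      unfolding mx_def using rfl[OF that(1)] rfl[OF that(2)] by auto
  qed
  have am: "(a, m a) \<in> R" if "a \<in> X" for a
  proof (cases "a \<in> ?S")
    case True then show ?thesis unfolding m_def using mxa(1)[OF that gX[OF True]] by simp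
  next
    case False then show ?thesis unfolding m_def using rfl[OF that] by simp
  qed
  have gm: "(g a, m a) \<in> R" if "a \<in> ?S" for a
  proof -
    have "a \<in> X" using SX that by blast
    then show ?thesis unfolding m_def using mxa(2)[OF _ gX[OF that]] that by simp
  qed
  define R1 where "R1 = {(a, b). a \<in> X \<and> b \<in> X \<and> (m a, m b) \<in> R}"
  have P1: "preordering_of X R1"
    unfolding preordering_of_def
  proof (intro conjI)
    show "R1 \<subseteq> X \<times> X" unfolding R1_def by auto
    show "refl_on X R1" unfolding R1_def refl_on_def using rfl mX by auto
    show "trans R1" unfolding R1_def trans_def using trr by fast
    show "total_on X R1" unfolding R1_def total_on_def using tt mX by auto
    show "\<forall>x\<in>X. \<exists>y\<in>X. (y, x) \<notin> R1"
    proof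
      fix x assume x: "x \<in> X"
      then obtain y where y: "y \<in> X" "(y, m x) \<notin> R" using nl mX by blast
      have "(m y, m x) \<notin> R" using y(2) am[OF y(1)] trr by metis
      then show "\<exists>y\<in>X. (y, x) \<notin> R1" using y unfolding R1_def by auto
    qed
  qed
  have sub1: "Seg X R1 \<subseteq> Seg X R"
  proof
    fix Y assume "Y \<in> Seg X R1"
    then obtain x where x: "x \<in> X" "Y \<subseteq> X" "Y \<subseteq> seg_below R1 x" unfolding Seg_def by auto
    have "Y \<subseteq> seg_below R (m x)"
    proof
      fix y assume "y \<in> Y"
      then have "y \<in> X" "(m y, m x) \<in> R" using x unfolding seg_below_def R1_def by auto
      then show "y \<in> seg_below R (m x)" using am trr unfolding seg_below_def by (metis mem_Collect_eq)
    qed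
    then show "Y \<in> Seg X R" using x mX unfolding Seg_def by auto
  qed
  have "?S \<in> Seg X R" using SX x0 unfolding Seg_def by auto
  moreover have "?S \<notin> Seg X R1"
  proof
    assume "?S \<in> Seg X R1"
    then obtain x where x: "x \<in> X" "?S \<subseteq> seg_below R1 x" unfolding Seg_def by auto
    have "C \<subseteq> seg_below R (m x)"
    proof
      fix c assume "c \<in> C"
      then obtain a where a: "a \<in> ?S" "c = g a" using g by auto
      then have "(m a, m x) \<in> R" using x unfolding R1_def seg_below_def by auto
      then show "c \<in> seg_below R (m x)" using gm[OF a(1)] a(2) trr unfolding seg_below_def by (metis mem_Collect_eq)
    qed
    then show False using ub mX x by blast
  qed
  ultimately show ?thesis using P1 sub1 by blast
qed

lemma seg_ideal:
  assumes P: "preordering_of X R"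
  shows "is_ideal X (Seg X R)"
proof -
  from P have tot: "total_on X R" and tr: "trans R" and rf: "refl_on X R"
    and nl: "\<forall>x\<in>X. \<exists>y\<in>X. (y, x) \<notin> R"
    unfolding preordering_of_def by auto
  have tt: "(a, b) \<in> R \<or> (b, a) \<in> R" if "a \<in> X" "b \<in> X" for a b
    using tot rf that unfolding total_on_def refl_on_def by metis
  have un: "Y1 \<union> Y2 \<in> Seg X R" if h: "Y1 \<in> Seg X R" "Y2 \<in> Seg X R" for Y1 Y2
  proof -
    obtain a where a: "a \<in> X" "Y1 \<subseteq> X" "Y1 \<subseteq> seg_below R a" using h unfolding Seg_def by blast
    obtain b where b: "b \<in> X" "Y2 \<subseteq> X" "Y2 \<subseteq> seg_below R b" using h unfolding Seg_def by blast
    show ?thesis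
    proof (cases "(a, b) \<in> R")
      case True
      then have "seg_below R a \<subseteq> seg_below R b" using tr unfolding seg_below_def trans_def by blast
      then show ?thesis using a b unfolding Seg_def by blast
    next
      case False
      then have "(b, a) \<in> R" using tt a b by blast
      then have "seg_below R b \<subseteq> seg_below R a" using tr unfolding seg_below_def trans_def by blast
      then show ?thesis using a b unfolding Seg_def by blast
    qed
  qed
  have nX: "X \<notin> Seg X R"
  proof
    assume "X \<in> Seg X R"
    then obtain x where x: "x \<in> X" "X \<subseteq> seg_below R x" unfolding Seg_def by auto
    then show False using nl unfolding seg_below_def by blast
  qed
  have "Seg X R \<subseteq> Pow X" unfolding Seg_def by auto
  moreover have "\<forall>Y\<in>Seg X R. \<forall>Z. Z \<subseteq> Y \<longrightarrow> Z \<in> Seg X R" unfolding Seg_def by blast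
  ultimately show ?thesis unfolding is_ideal_def using un nX by blast
qed

theorem theorem2p11:
  fixes r :: "'a rel"
  assumes "singular_card r"
  shows "\<not> (\<exists>I. minimal_access_ideal (Field r) I)
    \<and> \<not> minimal_access_ideal (Field r) (Seg (Field r) r)
    \<and> (\<forall>R. preordering_of (Field r) R \<longrightarrow>
          (\<exists>R1. preordering_of (Field r) R1 \<and> Seg (Field r) R1 \<subset> Seg (Field r) R))"
proof -
  have third: "\<forall>R. preordering_of (Field r) R \<longrightarrow>
          (\<exists>R1. preordering_of (Field r) R1 \<and> Seg (Field r) R1 \<subset> Seg (Field r) R)"
  proof (intro allI impI)
    fix R assume P: "preordering_of (Field r) R"
    obtain x0 C where "x0 \<in> Field r" "C \<subseteq> Field r" "\<forall>x\<in>Field r. \<not> C \<subseteq> seg_below R x"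
      "|C| \<le>o |seg_below R x0|" using key[OF P assms] by blast
    then show "\<exists>R1. preordering_of (Field r) R1 \<and> Seg (Field r) R1 \<subset> Seg (Field r) R"
      using construct[OF P] by blast
  qed
  have first: "\<not> (\<exists>I. minimal_access_ideal (Field r) I)"
  proof
    assume "\<exists>I. minimal_access_ideal (Field r) I"
    then obtain I R where I: "is_ideal (Field r) I" "preordering_of (Field r) R" "Seg (Field r) R \<subseteq> I"
      and mn: "\<not> (\<exists>J. is_ideal (Field r) J \<and> J \<subset> I \<and> access_ideal (Field r) J)"
      unfolding minimal_access_ideal_def access_ideal_def by blast
    obtain R1 where R1: "preordering_of (Field r) R1" "Seg (Field r) R1 \<subset> Seg (Field r) R"
      using third I(2) by blast
    have "is_ideal (Field r) (Seg (Field r) R1)" using seg_ideal[OF R1(1)] .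
    moreover have "access_ideal (Field r) (Seg (Field r) R1)"
      unfolding access_ideal_def using calculation R1(1) by blast
    moreover have "Seg (Field r) R1 \<subset> I" using R1(2) I(3) by blast
    ultimately show False using mn by blast
  qed
  show ?thesis using first third by blast
qed

end
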